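(* In the adversarial edge arrival model for integral matchings, no online algorithm (deterministic or randomized) achieves a guarantee larger than $0.58065$ on graphs of maximum degree three. That is, for every online algorithm $\mathcal{ALG}$ and every $\gamma>0.58065$ there is an instance (a graph of maximum degree at most three with an adversarial edge arrival order) and a timepoint $t$ at which $\mathbb{E}[|M_t|] < \gamma\,\nu(G_t)$, where $M_t$ is the matching held by $\mathcal{ALG}$ at time $t$.
   Context: Adversarial edge arrival model for integral matchings: edges arrive one at a time in an order chosen by an (oblivious) adversary; upon arrival of an edge, the algorithm must immediately and irrevocably decide whether to add it to its current matching (which must remain a matching). A (possibly randomized) algorithm achieves guarantee $\gamma$ if at every timepoint the expected size of its matching is at least $\gamma\cdot\nu(G_t)$, where $\nu(G_t)$ is the maximum matching cardinality of the arrived graph $G_t$. *)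

theory Defs
  imports "HOL-Probability.Probability"
begin

text \<open>Vertices are natural numbers; an (undirected) edge is a 2-element vertex set.
An instance is the adversarial arrival sequence: a list of edges, edge number i arrives at time i+1.\<close>

type_synonym edge = "nat set"

definition is_matching :: "edge set \<Rightarrow> bool" where
  "is_matching M \<longleftrightarrow> (\<forall>e\<in>M. \<forall>f\<in>M. e \<noteq> f \<longrightarrow> e \<inter> f = {})"

definition nu :: "edge set \<Rightarrow> nat" where
  "nu E = Max {card M | M. M \<subseteq> E \<and> is_matching M}"

definition valid_instance_deg3 :: "edge list \<Rightarrow> bool" where
  "valid_instance_deg3 es \<longleftrightarrow> distinct es \<and> (\<forall>e\<in>set es. card e = 2)
     \<and> (\<forall>v. card {e \<in> set es. v \<in> e} \<le> 3)"

text \<open>An online algorithm (possibly randomized) in behavioural form: given the edges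
arrived so far (the last one being the current edge) and its own previous decisions,
it returns the probability of accepting the current edge (values are clamped to [0,1]).
Deterministic algorithms are those returning only 0 or 1.\<close>
type_synonym online_alg = "edge list \<Rightarrow> bool list \<Rightarrow> real"

definition matched :: "edge list \<Rightarrow> bool list \<Rightarrow> edge set" where
  "matched es ds = {es ! i | i. i < length ds \<and> ds ! i}"

fun run :: "online_alg \<Rightarrow> edge list \<Rightarrow> nat \<Rightarrow> bool list pmf" where
  "run alg es 0 = return_pmf []"
| "run alg es (Suc n) =
     bind_pmf (run alg es n) (\<lambda>ds.
       bind_pmf
         (if (\<forall>f\<in>matched es ds. f \<inter> es ! n = {})
          then bernoulli_pmf (alg (take (Suc n) es) ds)
          else return_pmf False)
         (\<lambda>b. return_pmf (ds @ [b])))"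

definition expected_size :: "online_alg \<Rightarrow> edge list \<Rightarrow> nat \<Rightarrow> real" where
  "expected_size alg es t =
     measure_pmf.expectation (run alg es t) (\<lambda>ds. real (card (matched es ds)))"

end

theory Submission
  imports Defs
begin


lemma run_length: "ds \<in> set_pmf (run alg es n) \<Longrightarrow> length ds = n"
  by (induction n arbitrary: ds) (auto split: if_splits)

lemma matched_cong:
  assumes "length ds \<le> m"
  shows "matched (take m es) ds = matched es ds"
proof -
  have h: "\<And>i. i < length ds \<Longrightarrow> take m es ! i = es ! i" using assms by auto
  show ?thesis unfolding matched_def using h by force
qed



lemma run_take_es: "n \<le> m \<Longrightarrow> run alg (take m es) n = run alg es n"
proof (induction n)
  case 0 then show ?case by simp
next
  case (Suc n)
  have IH: "run alg (take m es) n = run alg es n" using Suc by simp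
  have 1: "take m es ! n = es ! n" using Suc.prems by simp
  have 2: "take (Suc n) (take m es) = take (Suc n) es" using Suc.prems by (simp add: min_def)
  show ?case
    unfolding run.simps IH 1 2
    apply (rule bind_pmf_cong[OF refl])
    subgoal for ds using run_length[of ds alg es n] Suc.prems by (simp add: matched_cong)
    done
qed

lemma run_prefix: "take n es = take n es' \<Longrightarrow> run alg es n = run alg es' n"
  by (metis order_refl run_take_es)

lemma run_map_take: "m \<le> n \<Longrightarrow> map_pmf (take m) (run alg es n) = run alg es m"
proof (induction n)
  case 0 then show ?case by simp
next
  case (Suc n)
  show ?case
  proof (cases "m = Suc n")
    case True
    have "map_pmf (take m) (run alg es (Suc n)) = map_pmf id (run alg es (Suc n))"
      apply (rule map_pmf_cong[OF refl]) using run_length True by fastforce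
    then show ?thesis using True by (simp add: pmf.map_id)
  next
    case False
    then have mn: "m \<le> n" using Suc.prems by simp
    have "map_pmf (take m) (run alg es (Suc n)) = bind_pmf (run alg es n) (\<lambda>ds. return_pmf (take m ds))"
      unfolding run.simps map_bind_pmf
      apply (rule bind_pmf_cong[OF refl])
      subgoal for ds using run_length[of ds alg es n] mn by (simp add: map_bind_pmf bind_pmf_const)
      done
    also have "\<dots> = map_pmf (take m) (run alg es n)" by (simp add: map_pmf_def)
    finally have "map_pmf (take m) (run alg es (Suc n)) = map_pmf (take m) (run alg es n)" .
    then show ?thesis using Suc.IH mn by simp
  qed
qed



lemma run_step_set:
  assumes "ds \<in> set_pmf (run alg es (Suc n))"
  shows "\<exists>ds' b. ds = ds' @ [b] \<and> ds' \<in> set_pmf (run alg es n) \<and>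
           (b \<longrightarrow> (\<forall>f\<in>matched es ds'. f \<inter> es!n = {}))"
  using assms by (auto split: if_splits)

lemma run_inv:
  assumes "ds \<in> set_pmf (run alg es n)"
  shows "\<forall>i<n. \<forall>j<n. i \<noteq> j \<longrightarrow> ds!i \<longrightarrow> ds!j \<longrightarrow> es!i \<inter> es!j = {}"
  using assms
proof (induction n arbitrary: ds)
  case 0 then show ?case by simp
next
  case (Suc n)
  obtain ds' b where ds: "ds = ds' @ [b]" and ds': "ds' \<in> set_pmf (run alg es n)"
    and b: "b \<longrightarrow> (\<forall>f\<in>matched es ds'. f \<inter> es!n = {})"
    using run_step_set[OF Suc.prems] by blast
  have len: "length ds' = n" using run_length[OF ds'] .
  note IH = Suc.IH[OF ds']
  have nth1: "\<And>i. i < n \<Longrightarrow> ds!i = ds'!i" using ds len by (simp add: nth_append)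
  have nth2: "ds!n = b" using ds len by (metis nth_append_length)
  have key: "\<And>i. i < n \<Longrightarrow> ds!i \<Longrightarrow> ds!n \<Longrightarrow> es!i \<inter> es!n = {}"
  proof -
    fix i assume i: "i < n" "ds!i" "ds!n"
    have "es!i \<in> matched es ds'" unfolding matched_def using i nth1 len by auto
    then show "es!i \<inter> es!n = {}" using b i nth2 by blast
  qed
  show ?case
  proof (intro allI impI)
    fix i j assume ij: "i < Suc n" "j < Suc n" "i \<noteq> j" "ds!i" "ds!j"
    show "es!i \<inter> es!j = {}"
    proof (cases "i = n")
      case True
      then have "j < n" using ij by simp
      then show ?thesis using key[of j] ij True by blast
    next
      case False
      show ?thesis
      proof (cases "j = n")
        case True
        then show ?thesis using key[of i] ij False by (simp add: Int_commute)
      next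
        case False': False
        then show ?thesis using IH ij False nth1 by auto
      qed
    qed
  qed
qed

definition p :: "online_alg \<Rightarrow> edge list \<Rightarrow> nat \<Rightarrow> real" where
  "p alg es i = measure_pmf.prob (run alg es (Suc i)) {ds. ds!i}"

lemma p_prefix: "take (Suc i) es = take (Suc i) es' \<Longrightarrow> p alg es i = p alg es' i"
  unfolding p_def by (metis run_prefix)

lemma p_nonneg: "0 \<le> p alg es i"
  unfolding p_def by simp

lemma prob_run: "i < t \<Longrightarrow> measure_pmf.prob (run alg es t) {ds. ds!i} = p alg es i"
proof -
  assume "i < t"
  then have "run alg es (Suc i) = map_pmf (take (Suc i)) (run alg es t)"
    using run_map_take[of "Suc i" t alg es] by simp
  moreover have "take (Suc i) -` {ds. ds!i} = {ds::bool list. ds!i}"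
  proof -
    have "take (Suc i) ds ! i = ds ! i" for ds :: "bool list"
      by (cases "i < length ds") (auto simp: take_all)
    then show ?thesis by auto
  qed
  ultimately show ?thesis unfolding p_def by simp
qed

lemma exp_sum_ind:
  assumes "finite I" "I \<subseteq> {..<t}"
  shows "measure_pmf.expectation (run alg es t) (\<lambda>ds. \<Sum>i\<in>I. indicator {ds. ds!i} ds :: real)
         = (\<Sum>i\<in>I. p alg es i)"
proof -
  have "measure_pmf.expectation (run alg es t) (\<lambda>ds. \<Sum>i\<in>I. indicator {ds. ds!i} ds :: real)
        = (\<Sum>i\<in>I. measure_pmf.expectation (run alg es t) (indicator {ds. ds!i}))"
    by (rule Bochner_Integration.integral_sum) (simp add: less_top[symmetric] measure_pmf.emeasure_finite)
  also have "\<dots> = (\<Sum>i\<in>I. p alg es i)"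
    apply (rule sum.cong[OF refl])
    using assms prob_run by auto
  finally show ?thesis .
qed

lemma card_matched:
  assumes "distinct es" "length ds \<le> length es"
  shows "card (matched es ds) = card {i. i < length ds \<and> ds!i}"
proof -
  have "matched es ds = (\<lambda>i. es!i) ` {i. i < length ds \<and> ds!i}"
    unfolding matched_def by auto
  moreover have "inj_on (\<lambda>i. es!i) {i. i < length ds \<and> ds!i}"
    using assms by (auto simp: inj_on_def nth_eq_iff_index_eq)
  ultimately show ?thesis by (simp add: card_image)
qed

lemma expected_size_sum:
  assumes "distinct es" "t \<le> length es"
  shows "expected_size alg es t = (\<Sum>i<t. p alg es i)"
proof -
  have "\<forall>ds\<in>set_pmf (run alg es t). real (card (matched es ds)) = (\<Sum>i\<in>{..<t}. indicator {ds. ds!i} ds)"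
  proof
    fix ds assume ds: "ds \<in> set_pmf (run alg es t)"
    then have len: "length ds = t" by (rule run_length)
    have e: "{i. i < length ds \<and> ds!i} = {i\<in>{..<t}. ds!i}" using len by auto
    have c0: "card (matched es ds) = card {i. i < length ds \<and> ds!i}"
      using card_matched[OF assms(1)] len assms(2) by simp
    have "card (matched es ds) = card {i\<in>{..<t}. ds!i}" using c0 e by metis
    then have "real (card (matched es ds)) = real (card {i\<in>{..<t}. ds!i})" by simp
    also have "\<dots> = (\<Sum>i\<in>{..<t}. indicator {ds. ds!i} ds)"
      by (simp add: indicator_def sum.If_cases Int_def)
    finally show "real (card (matched es ds)) = (\<Sum>i\<in>{..<t}. indicator {ds. ds!i} ds)" .
  qed
  then have "expected_size alg es t = measure_pmf.expectation (run alg es t) (\<lambda>ds. \<Sum>i\<in>{..<t}. indicator {ds. ds!i} ds :: real)"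
    unfolding expected_size_def by (intro integral_cong_AE) (auto intro!: AE_pmfI)
  also have "\<dots> = (\<Sum>i<t. p alg es i)" by (rule exp_sum_ind) auto
  finally show ?thesis .
qed

lemma packing:
  assumes "I \<subseteq> {..<t}" "\<forall>i\<in>I. \<forall>j\<in>I. i \<noteq> j \<longrightarrow> es!i \<inter> es!j \<noteq> {}"
  shows "(\<Sum>i\<in>I. p alg es i) \<le> 1"
proof -
  have fin: "finite I" using assms(1) finite_subset by blast
  have pt: "(\<Sum>i\<in>I. indicator {ds. ds!i} ds :: real) \<le> 1" if ds: "ds \<in> set_pmf (run alg es t)" for ds
  proof -
    have inv: "\<forall>i<t. \<forall>j<t. i \<noteq> j \<longrightarrow> ds!i \<longrightarrow> ds!j \<longrightarrow> es!i \<inter> es!j = {}"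
      by (rule run_inv[OF ds])
    have all: "\<forall>x\<in>{i\<in>I. ds!i}. \<forall>y\<in>{i\<in>I. ds!i}. x = y"
    proof (intro ballI)
      fix x y assume x: "x \<in> {i\<in>I. ds!i}" and y: "y \<in> {i\<in>I. ds!i}"
      show "x = y"
      proof (rule ccontr)
        assume xy: "x \<noteq> y"
        have "x < t" "y < t" using x y assms(1) by auto
        then have "es!x \<inter> es!y = {}" using inv xy x y by blast
        moreover have "es!x \<inter> es!y \<noteq> {}" using assms(2) x y xy by blast
        ultimately show False by simp
      qed
    qed
    have sub: "card {i\<in>I. ds!i} \<le> 1"
      using card_le_Suc0_iff_eq[of "{i\<in>I. ds!i}"] fin all by simp
    have "(\<Sum>i\<in>I. indicator {ds. ds!i} ds :: real) = real (card {i\<in>I. ds!i})"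
      using fin by (simp add: indicator_def sum.If_cases Int_def)
    then show ?thesis using sub by simp
  qed
  have "(\<Sum>i\<in>I. p alg es i) = measure_pmf.expectation (run alg es t) (\<lambda>ds. \<Sum>i\<in>I. indicator {ds. ds!i} ds :: real)"
    using exp_sum_ind[OF fin assms(1)] by simp
  also have "\<dots> \<le> 1"
    by (rule measure_pmf.integral_le_const) (auto intro!: AE_pmfI pt simp: less_top[symmetric] measure_pmf.emeasure_finite)
  finally show ?thesis .
qed


lemma nu_ge:
  assumes "finite E" "M \<subseteq> E" "is_matching M"
  shows "card M \<le> nu E"
proof -
  have fin: "finite {card M | M. M \<subseteq> E \<and> is_matching M}"
  proof (rule finite_subset)
    show "{card M | M. M \<subseteq> E \<and> is_matching M} \<subseteq> card ` Pow E" by auto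
    show "finite (card ` Pow E)" using assms(1) by simp
  qed
  show ?thesis unfolding nu_def using fin assms by (auto intro!: Max_ge)
qed

lemma deg_card: "distinct es \<Longrightarrow> card {e \<in> set es. v \<in> e} = length (filter (\<lambda>e. v \<in> e) es)"
  by (metis distinct_card distinct_filter set_filter)

definition spineS :: "edge list" where
  "spineS = [{0,1},{0,2},{1,3},{1,4},{3,5},{3,6},{5,7},{5,8},{7,9},{7,10},{9,11},{9,12},{11,13},{11,14},{13,15},{13,16},{15,17},{15,18},{17,19}]"

definition branchB :: "edge list" where
  "branchB = [{0,1},{0,2},{0,3},{1,2}]"

lemma spineS_valid: "valid_instance_deg3 spineS"
proof -
  have d: "distinct spineS" by (simp add: spineS_def doubleton_eq_iff)
  have c: "\<forall>e\<in>set spineS. card e = 2" by (simp add: spineS_def)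
  have "length (filter (\<lambda>e. v \<in> e) spineS) \<le> 3" for v
  proof (cases "v < 20")
    case True
    then have "v \<in> {..<20}" by simp
    then show ?thesis unfolding spineS_def
      by (simp add: lessThan_nat_numeral)
  next
    case False
    then show ?thesis unfolding spineS_def by simp
  qed
  then have "card {e \<in> set spineS. v \<in> e} \<le> 3" for v by (simp add: deg_card[OF d])
  then show ?thesis using d c unfolding valid_instance_deg3_def by blast
qed

lemma branchB_valid: "valid_instance_deg3 branchB"
proof -
  have d: "distinct branchB" by (simp add: branchB_def doubleton_eq_iff)
  have c: "\<forall>e\<in>set branchB. card e = 2" by (simp add: branchB_def)
  have "length (filter (\<lambda>e. v \<in> e) branchB) \<le> 3" for v
  proof (cases "v < 4")
    case True
    then have "v \<in> {..<4}" by simp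
    then show ?thesis unfolding branchB_def
      by (simp add: lessThan_nat_numeral)
  next
    case False
    then show ?thesis unfolding branchB_def by simp
  qed
  then have "card {e \<in> set branchB. v \<in> e} \<le> 3" for v by (simp add: deg_card[OF d])
  then show ?thesis using d c unfolding valid_instance_deg3_def by blast
qed

lemma ratio_helper:
  assumes H: "\<And>es t. valid_instance_deg3 es \<Longrightarrow> t \<le> length es \<Longrightarrow>
                 \<gamma> * real (nu (set (take t es))) \<le> expected_size alg es t"
    and v: "valid_instance_deg3 es" and t: "t \<le> length es"
    and k: "k \<le> nu (set (take t es))" and g: "0 \<le> \<gamma>"
  shows "\<gamma> * real k \<le> (\<Sum>i<t. p alg es i)"
proof -
  have "\<gamma> * real k \<le> \<gamma> * real (nu (set (take t es)))"
    using k g by (simp add: mult_left_mono)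
  also have "\<dots> \<le> expected_size alg es t" using H v t by blast
  also have "\<dots> = (\<Sum>i<t. p alg es i)"
    using v t unfolding valid_instance_deg3_def by (simp add: expected_size_sum)
  finally show ?thesis .
qed

lemma nuS_1: "1 \<le> nu (set (take 1 spineS))"
proof -
  have "card ({{0,1}} :: edge set) \<le> nu (set (take 1 spineS))"
    by (rule nu_ge) (auto simp: spineS_def is_matching_def)
  moreover have "card ({{0,1}} :: edge set) = 1"
    by (simp add: doubleton_eq_iff)
  ultimately show ?thesis by simp
qed

lemma nuS_3: "2 \<le> nu (set (take 3 spineS))"
proof -
  have "card ({{0,2},{1,3}} :: edge set) \<le> nu (set (take 3 spineS))"
    by (rule nu_ge) (auto simp: spineS_def is_matching_def)
  moreover have "card ({{0,2},{1,3}} :: edge set) = 2"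
    by (simp add: doubleton_eq_iff)
  ultimately show ?thesis by simp
qed

lemma nuS_5: "3 \<le> nu (set (take 5 spineS))"
proof -
  have "card ({{0,2},{1,4},{3,5}} :: edge set) \<le> nu (set (take 5 spineS))"
    by (rule nu_ge) (auto simp: spineS_def is_matching_def)
  moreover have "card ({{0,2},{1,4},{3,5}} :: edge set) = 3"
    by (simp add: doubleton_eq_iff)
  ultimately show ?thesis by simp
qed

lemma nuS_7: "4 \<le> nu (set (take 7 spineS))"
proof -
  have "card ({{0,2},{1,4},{3,6},{5,7}} :: edge set) \<le> nu (set (take 7 spineS))"
    by (rule nu_ge) (auto simp: spineS_def is_matching_def)
  moreover have "card ({{0,2},{1,4},{3,6},{5,7}} :: edge set) = 4"
    by (simp add: doubleton_eq_iff)
  ultimately show ?thesis by simp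
qed

lemma nuS_9: "5 \<le> nu (set (take 9 spineS))"
proof -
  have "card ({{0,2},{1,4},{3,6},{5,8},{7,9}} :: edge set) \<le> nu (set (take 9 spineS))"
    by (rule nu_ge) (auto simp: spineS_def is_matching_def)
  moreover have "card ({{0,2},{1,4},{3,6},{5,8},{7,9}} :: edge set) = 5"
    by (simp add: doubleton_eq_iff)
  ultimately show ?thesis by simp
qed

lemma nuS_11: "6 \<le> nu (set (take 11 spineS))"
proof -
  have "card ({{0,2},{1,4},{3,6},{5,8},{7,10},{9,11}} :: edge set) \<le> nu (set (take 11 spineS))"
    by (rule nu_ge) (auto simp: spineS_def is_matching_def)
  moreover have "card ({{0,2},{1,4},{3,6},{5,8},{7,10},{9,11}} :: edge set) = 6"
    by (simp add: doubleton_eq_iff)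
  ultimately show ?thesis by simp
qed

lemma nuS_13: "7 \<le> nu (set (take 13 spineS))"
proof -
  have "card ({{0,2},{1,4},{3,6},{5,8},{7,10},{9,12},{11,13}} :: edge set) \<le> nu (set (take 13 spineS))"
    by (rule nu_ge) (auto simp: spineS_def is_matching_def)
  moreover have "card ({{0,2},{1,4},{3,6},{5,8},{7,10},{9,12},{11,13}} :: edge set) = 7"
    by (simp add: doubleton_eq_iff)
  ultimately show ?thesis by simp
qed

lemma nuS_15: "8 \<le> nu (set (take 15 spineS))"
proof -
  have "card ({{0,2},{1,4},{3,6},{5,8},{7,10},{9,12},{11,14},{13,15}} :: edge set) \<le> nu (set (take 15 spineS))"
    by (rule nu_ge) (auto simp: spineS_def is_matching_def)
  moreover have "card ({{0,2},{1,4},{3,6},{5,8},{7,10},{9,12},{11,14},{13,15}} :: edge set) = 8"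
    by (simp add: doubleton_eq_iff)
  ultimately show ?thesis by simp
qed

lemma nuS_17: "9 \<le> nu (set (take 17 spineS))"
proof -
  have "card ({{0,2},{1,4},{3,6},{5,8},{7,10},{9,12},{11,14},{13,16},{15,17}} :: edge set) \<le> nu (set (take 17 spineS))"
    by (rule nu_ge) (auto simp: spineS_def is_matching_def)
  moreover have "card ({{0,2},{1,4},{3,6},{5,8},{7,10},{9,12},{11,14},{13,16},{15,17}} :: edge set) = 9"
    by (simp add: doubleton_eq_iff)
  ultimately show ?thesis by simp
qed

lemma nuS_19: "10 \<le> nu (set (take 19 spineS))"
proof -
  have "card ({{0,2},{1,4},{3,6},{5,8},{7,10},{9,12},{11,14},{13,16},{15,18},{17,19}} :: edge set) \<le> nu (set (take 19 spineS))"
    by (rule nu_ge) (auto simp: spineS_def is_matching_def)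
  moreover have "card ({{0,2},{1,4},{3,6},{5,8},{7,10},{9,12},{11,14},{13,16},{15,18},{17,19}} :: edge set) = 10"
    by (simp add: doubleton_eq_iff)
  ultimately show ?thesis by simp
qed

lemma nuB: "2 \<le> nu (set (take 4 branchB))"
proof -
  have "card ({{1,2},{0,3}} :: edge set) \<le> nu (set (take 4 branchB))"
    by (rule nu_ge) (auto simp: branchB_def is_matching_def)
  moreover have "card ({{1,2},{0,3}} :: edge set) = 2"
    by (simp add: doubleton_eq_iff)
  ultimately show ?thesis by simp
qed

theorem mainTheorem2:
  fixes alg :: online_alg and \<gamma> :: real
  assumes "\<gamma> > 0.58065"
  shows "\<exists>es t. valid_instance_deg3 es \<and> t \<le> length es \<and>
           expected_size alg es t < \<gamma> * real (nu (set (take t es)))"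
proof (rule ccontr)
  assume "\<not> ?thesis"
  then have H: "\<And>es t. valid_instance_deg3 es \<Longrightarrow> t \<le> length es \<Longrightarrow>
                 \<gamma> * real (nu (set (take t es))) \<le> expected_size alg es t"
    by (meson not_less)
  have g: "0 \<le> \<gamma>" using assms by simp
  have lenS: "length spineS = 19" by (simp add: spineS_def)
  have lenB: "length branchB = 4" by (simp add: branchB_def)
  have pB0: "p alg branchB 0 = p alg spineS 0"
    by (rule p_prefix) (simp add: spineS_def branchB_def)
  have pB1: "p alg branchB 1 = p alg spineS 1"
    by (rule p_prefix) (simp add: spineS_def branchB_def)
  have t1: "(1::nat) \<le> length spineS" unfolding lenS by simp
  have r1: "\<gamma> * real 1 \<le> (\<Sum>i<1. p alg spineS i)"
    by (rule ratio_helper[OF H spineS_valid t1 nuS_1 g])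
  have e1: "(\<Sum>i<1. p alg spineS i) = p alg spineS 0" by (simp add: lessThan_nat_numeral)
  have t3: "(3::nat) \<le> length spineS" unfolding lenS by simp
  have r3: "\<gamma> * real 2 \<le> (\<Sum>i<3. p alg spineS i)"
    by (rule ratio_helper[OF H spineS_valid t3 nuS_3 g])
  have e3: "(\<Sum>i<3. p alg spineS i) = p alg spineS 0 + p alg spineS 1 + p alg spineS 2" by (simp add: lessThan_nat_numeral)
  have t5: "(5::nat) \<le> length spineS" unfolding lenS by simp
  have r5: "\<gamma> * real 3 \<le> (\<Sum>i<5. p alg spineS i)"
    by (rule ratio_helper[OF H spineS_valid t5 nuS_5 g])
  have e5: "(\<Sum>i<5. p alg spineS i) = p alg spineS 0 + p alg spineS 1 + p alg spineS 2 + p alg spineS 3 + p alg spineS 4" by (simp add: lessThan_nat_numeral)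
  have t7: "(7::nat) \<le> length spineS" unfolding lenS by simp
  have r7: "\<gamma> * real 4 \<le> (\<Sum>i<7. p alg spineS i)"
    by (rule ratio_helper[OF H spineS_valid t7 nuS_7 g])
  have e7: "(\<Sum>i<7. p alg spineS i) = p alg spineS 0 + p alg spineS 1 + p alg spineS 2 + p alg spineS 3 + p alg spineS 4 + p alg spineS 5 + p alg spineS 6" by (simp add: lessThan_nat_numeral)
  have t9: "(9::nat) \<le> length spineS" unfolding lenS by simp
  have r9: "\<gamma> * real 5 \<le> (\<Sum>i<9. p alg spineS i)"
    by (rule ratio_helper[OF H spineS_valid t9 nuS_9 g])
  have e9: "(\<Sum>i<9. p alg spineS i) = p alg spineS 0 + p alg spineS 1 + p alg spineS 2 + p alg spineS 3 + p alg spineS 4 + p alg spineS 5 + p alg spineS 6 + p alg spineS 7 + p alg spineS 8" by (simp add: lessThan_nat_numeral)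
  have t11: "(11::nat) \<le> length spineS" unfolding lenS by simp
  have r11: "\<gamma> * real 6 \<le> (\<Sum>i<11. p alg spineS i)"
    by (rule ratio_helper[OF H spineS_valid t11 nuS_11 g])
  have e11: "(\<Sum>i<11. p alg spineS i) = p alg spineS 0 + p alg spineS 1 + p alg spineS 2 + p alg spineS 3 + p alg spineS 4 + p alg spineS 5 + p alg spineS 6 + p alg spineS 7 + p alg spineS 8 + p alg spineS 9 + p alg spineS 10" by (simp add: lessThan_nat_numeral)
  have t13: "(13::nat) \<le> length spineS" unfolding lenS by simp
  have r13: "\<gamma> * real 7 \<le> (\<Sum>i<13. p alg spineS i)"
    by (rule ratio_helper[OF H spineS_valid t13 nuS_13 g])
  have e13: "(\<Sum>i<13. p alg spineS i) = p alg spineS 0 + p alg spineS 1 + p alg spineS 2 + p alg spineS 3 + p alg spineS 4 + p alg spineS 5 + p alg spineS 6 + p alg spineS 7 + p alg spineS 8 + p alg spineS 9 + p alg spineS 10 + p alg spineS 11 + p alg spineS 12" by (simp add: lessThan_nat_numeral)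
  have t15: "(15::nat) \<le> length spineS" unfolding lenS by simp
  have r15: "\<gamma> * real 8 \<le> (\<Sum>i<15. p alg spineS i)"
    by (rule ratio_helper[OF H spineS_valid t15 nuS_15 g])
  have e15: "(\<Sum>i<15. p alg spineS i) = p alg spineS 0 + p alg spineS 1 + p alg spineS 2 + p alg spineS 3 + p alg spineS 4 + p alg spineS 5 + p alg spineS 6 + p alg spineS 7 + p alg spineS 8 + p alg spineS 9 + p alg spineS 10 + p alg spineS 11 + p alg spineS 12 + p alg spineS 13 + p alg spineS 14" by (simp add: lessThan_nat_numeral)
  have t17: "(17::nat) \<le> length spineS" unfolding lenS by simp
  have r17: "\<gamma> * real 9 \<le> (\<Sum>i<17. p alg spineS i)"
    by (rule ratio_helper[OF H spineS_valid t17 nuS_17 g])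
  have e17: "(\<Sum>i<17. p alg spineS i) = p alg spineS 0 + p alg spineS 1 + p alg spineS 2 + p alg spineS 3 + p alg spineS 4 + p alg spineS 5 + p alg spineS 6 + p alg spineS 7 + p alg spineS 8 + p alg spineS 9 + p alg spineS 10 + p alg spineS 11 + p alg spineS 12 + p alg spineS 13 + p alg spineS 14 + p alg spineS 15 + p alg spineS 16" by (simp add: lessThan_nat_numeral)
  have t19: "(19::nat) \<le> length spineS" unfolding lenS by simp
  have r19: "\<gamma> * real 10 \<le> (\<Sum>i<19. p alg spineS i)"
    by (rule ratio_helper[OF H spineS_valid t19 nuS_19 g])
  have e19: "(\<Sum>i<19. p alg spineS i) = p alg spineS 0 + p alg spineS 1 + p alg spineS 2 + p alg spineS 3 + p alg spineS 4 + p alg spineS 5 + p alg spineS 6 + p alg spineS 7 + p alg spineS 8 + p alg spineS 9 + p alg spineS 10 + p alg spineS 11 + p alg spineS 12 + p alg spineS 13 + p alg spineS 14 + p alg spineS 15 + p alg spineS 16 + p alg spineS 17 + p alg spineS 18" by (simp add: lessThan_nat_numeral)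
  have tB: "(4::nat) \<le> length branchB" unfolding lenB by simp
  have rB: "\<gamma> * real 2 \<le> (\<Sum>i<4. p alg branchB i)"
    by (rule ratio_helper[OF H branchB_valid tB nuB g])
  have eB: "(\<Sum>i<4. p alg branchB i) = p alg branchB 0 + p alg branchB 1 + p alg branchB 2 + p alg branchB 3"
    by (simp add: lessThan_nat_numeral)
  have kB1: "p alg branchB 0 + p alg branchB 1 + p alg branchB 2 \<le> 1"
    using packing[of "{0,1,2}" 4 branchB alg] by (simp add: branchB_def)
  have kB2: "p alg branchB 0 + p alg branchB 1 + p alg branchB 3 \<le> 1"
    using packing[of "{0,1,3}" 4 branchB alg] by (simp add: branchB_def)
  have k0: "p alg spineS 0 + p alg spineS 2 + p alg spineS 3 \<le> 1"
    using packing[of "{0,2,3}" 19 spineS alg] by (simp add: spineS_def)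
  have k1: "p alg spineS 2 + p alg spineS 4 + p alg spineS 5 \<le> 1"
    using packing[of "{2,4,5}" 19 spineS alg] by (simp add: spineS_def)
  have k2: "p alg spineS 4 + p alg spineS 6 + p alg spineS 7 \<le> 1"
    using packing[of "{4,6,7}" 19 spineS alg] by (simp add: spineS_def)
  have k3: "p alg spineS 6 + p alg spineS 8 + p alg spineS 9 \<le> 1"
    using packing[of "{6,8,9}" 19 spineS alg] by (simp add: spineS_def)
  have k4: "p alg spineS 8 + p alg spineS 10 + p alg spineS 11 \<le> 1"
    using packing[of "{8,10,11}" 19 spineS alg] by (simp add: spineS_def)
  have k5: "p alg spineS 10 + p alg spineS 12 + p alg spineS 13 \<le> 1"
    using packing[of "{10,12,13}" 19 spineS alg] by (simp add: spineS_def)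
  have k6: "p alg spineS 12 + p alg spineS 14 + p alg spineS 15 \<le> 1"
    using packing[of "{12,14,15}" 19 spineS alg] by (simp add: spineS_def)
  have k7: "p alg spineS 14 + p alg spineS 16 + p alg spineS 17 \<le> 1"
    using packing[of "{14,16,17}" 19 spineS alg] by (simp add: spineS_def)
  have k8: "p alg spineS 16 + p alg spineS 18 \<le> 1"
    using packing[of "{16,18}" 19 spineS alg] by (simp add: spineS_def)
  have n1: "0 \<le> (p alg spineS 0) - \<gamma> * 1" using r1 e1 by linarith
  have n3: "0 \<le> (p alg spineS 0 + p alg spineS 1 + p alg spineS 2) - \<gamma> * 2" using r3 e3 by linarith
  have n5: "0 \<le> (p alg spineS 0 + p alg spineS 1 + p alg spineS 2 + p alg spineS 3 + p alg spineS 4) - \<gamma> * 3" using r5 e5 by linarith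
  have n7: "0 \<le> (p alg spineS 0 + p alg spineS 1 + p alg spineS 2 + p alg spineS 3 + p alg spineS 4 + p alg spineS 5 + p alg spineS 6) - \<gamma> * 4" using r7 e7 by linarith
  have n9: "0 \<le> (p alg spineS 0 + p alg spineS 1 + p alg spineS 2 + p alg spineS 3 + p alg spineS 4 + p alg spineS 5 + p alg spineS 6 + p alg spineS 7 + p alg spineS 8) - \<gamma> * 5" using r9 e9 by linarith
  have n11: "0 \<le> (p alg spineS 0 + p alg spineS 1 + p alg spineS 2 + p alg spineS 3 + p alg spineS 4 + p alg spineS 5 + p alg spineS 6 + p alg spineS 7 + p alg spineS 8 + p alg spineS 9 + p alg spineS 10) - \<gamma> * 6" using r11 e11 by linarith
  have n13: "0 \<le> (p alg spineS 0 + p alg spineS 1 + p alg spineS 2 + p alg spineS 3 + p alg spineS 4 + p alg spineS 5 + p alg spineS 6 + p alg spineS 7 + p alg spineS 8 + p alg spineS 9 + p alg spineS 10 + p alg spineS 11 + p alg spineS 12) - \<gamma> * 7" using r13 e13 by linarith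
  have n15: "0 \<le> (p alg spineS 0 + p alg spineS 1 + p alg spineS 2 + p alg spineS 3 + p alg spineS 4 + p alg spineS 5 + p alg spineS 6 + p alg spineS 7 + p alg spineS 8 + p alg spineS 9 + p alg spineS 10 + p alg spineS 11 + p alg spineS 12 + p alg spineS 13 + p alg spineS 14) - \<gamma> * 8" using r15 e15 by linarith
  have n17: "0 \<le> (p alg spineS 0 + p alg spineS 1 + p alg spineS 2 + p alg spineS 3 + p alg spineS 4 + p alg spineS 5 + p alg spineS 6 + p alg spineS 7 + p alg spineS 8 + p alg spineS 9 + p alg spineS 10 + p alg spineS 11 + p alg spineS 12 + p alg spineS 13 + p alg spineS 14 + p alg spineS 15 + p alg spineS 16) - \<gamma> * 9" using r17 e17 by linarith
  have n19: "0 \<le> (p alg spineS 0 + p alg spineS 1 + p alg spineS 2 + p alg spineS 3 + p alg spineS 4 + p alg spineS 5 + p alg spineS 6 + p alg spineS 7 + p alg spineS 8 + p alg spineS 9 + p alg spineS 10 + p alg spineS 11 + p alg spineS 12 + p alg spineS 13 + p alg spineS 14 + p alg spineS 15 + p alg spineS 16 + p alg spineS 17 + p alg spineS 18) - \<gamma> * 10" using r19 e19 by linarith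
  have nB: "0 \<le> (p alg branchB 0 + p alg branchB 1 + p alg branchB 2 + p alg branchB 3) - \<gamma> * 2" using rB eB by linarith
  have m0: "0 \<le> 1 - (p alg spineS 0 + p alg spineS 2 + p alg spineS 3)" using k0 by linarith
  have m1: "0 \<le> 1 - (p alg spineS 2 + p alg spineS 4 + p alg spineS 5)" using k1 by linarith
  have m2: "0 \<le> 1 - (p alg spineS 4 + p alg spineS 6 + p alg spineS 7)" using k2 by linarith
  have m3: "0 \<le> 1 - (p alg spineS 6 + p alg spineS 8 + p alg spineS 9)" using k3 by linarith
  have m4: "0 \<le> 1 - (p alg spineS 8 + p alg spineS 10 + p alg spineS 11)" using k4 by linarith
  have m5: "0 \<le> 1 - (p alg spineS 10 + p alg spineS 12 + p alg spineS 13)" using k5 by linarith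
  have m6: "0 \<le> 1 - (p alg spineS 12 + p alg spineS 14 + p alg spineS 15)" using k6 by linarith
  have m7: "0 \<le> 1 - (p alg spineS 14 + p alg spineS 16 + p alg spineS 17)" using k7 by linarith
  have m8: "0 \<le> 1 - (p alg spineS 16 + p alg spineS 18)" using k8 by linarith
  have mB1: "0 \<le> 1 - (p alg branchB 0 + p alg branchB 1 + p alg branchB 2)" using kB1 by linarith
  have mB2: "0 \<le> 1 - (p alg branchB 0 + p alg branchB 1 + p alg branchB 3)" using kB2 by linarith
  have D: "0 \<le> 34 * ((p alg spineS 0) - \<gamma> * 1) + 21 * ((p alg spineS 0 + p alg spineS 1 + p alg spineS 2) - \<gamma> * 2) + 13 * ((p alg spineS 0 + p alg spineS 1 + p alg spineS 2 + p alg spineS 3 + p alg spineS 4) - \<gamma> * 3) + 8 * ((p alg spineS 0 + p alg spineS 1 + p alg spineS 2 + p alg spineS 3 + p alg spineS 4 + p alg spineS 5 + p alg spineS 6) - \<gamma> * 4) + 5 * ((p alg spineS 0 + p alg spineS 1 + p alg spineS 2 + p alg spineS 3 + p alg spineS 4 + p alg spineS 5 + p alg spineS 6 + p alg spineS 7 + p alg spineS 8) - \<gamma> * 5) + 3 * ((p alg spineS 0 + p alg spineS 1 + p alg spineS 2 + p alg spineS 3 + p alg spineS 4 + p alg spineS 5 + p alg spineS 6 + p alg spineS 7 + p alg spineS 8 + p alg spineS 9 + p alg spineS 10) - \<gamma> * 6) + 2 * ((p alg spineS 0 + p alg spineS 1 + p alg spineS 2 + p alg spineS 3 + p alg spineS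 4 + p alg spineS 5 + p alg spineS 6 + p alg spineS 7 + p alg spineS 8 + p alg spineS 9 + p alg spineS 10 + p alg spineS 11 + p alg spineS 12) - \<gamma> * 7) + 1 * ((p alg spineS 0 + p alg spineS 1 + p alg spineS 2 + p alg spineS 3 + p alg spineS 4 + p alg spineS 5 + p alg spineS 6 + p alg spineS 7 + p alg spineS 8 + p alg spineS 9 + p alg spineS 10 + p alg spineS 11 + p alg spineS 12 + p alg spineS 13 + p alg spineS 14) - \<gamma> * 8) + 1 * ((p alg spineS 0 + p alg spineS 1 + p alg spineS 2 + p alg spineS 3 + p alg spineS 4 + p alg spineS 5 + p alg spineS 6 + p alg spineS 7 + p alg spineS 8 + p alg spineS 9 + p alg spineS 10 + p alg spineS 11 + p alg spineS 12 + p alg spineS 13 + p alg spineS 14 + p alg spineS 15 + p alg spineS 16) - \<gamma> * 9) + 1 * ((p alg spineS 0 + p alg spineS 1 + p alg spineS 2 + p alg spineS 3 + p alg spineS 4 + p alg spineS 5 + p alg spineS 6 + p alg spineS 7 + p alg spineS 8 + p alg spineS 9 + p alg spineS 10 + p alg spineS 11 + p alg spineS 12 + p alg spineS 13 + p alg spineS 14 + p alg spineS 15 + p alg spineS 16 + p alg spineS 17 + p alg spineS 18) - \<gamma> * 10) + 55 * ((p alg branchB 0 + p alg branchB 1 + p alg branchB 2 + p alg branchB 3) - \<gamma> * 2) + 34 * (1 - (p alg spineS 0 + p alg spineS 2 + p alg spineS 3)) + 21 * (1 - (p alg spineS 2 + p alg spineS 4 + p alg spineS 5)) + 13 * (1 -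 (p alg spineS 4 + p alg spineS 6 + p alg spineS 7)) + 8 * (1 - (p alg spineS 6 + p alg spineS 8 + p alg spineS 9)) + 5 * (1 - (p alg spineS 8 + p alg spineS 10 + p alg spineS 11)) + 3 * (1 - (p alg spineS 10 + p alg spineS 12 + p alg spineS 13)) + 2 * (1 - (p alg spineS 12 + p alg spineS 14 + p alg spineS 15)) + 1 * (1 - (p alg spineS 14 + p alg spineS 16 + p alg spineS 17)) + 1 * (1 - (p alg spineS 16 + p alg spineS 18)) + 55 * (1 - (p alg branchB 0 + p alg branchB 1 + p alg branchB 2)) + 55 * (1 - (p alg branchB 0 + p alg branchB 1 + p alg branchB 3))"
    by (intro add_nonneg_nonneg mult_nonneg_nonneg) (simp_all only: n1 n3 n5 n7 n9 n11 n13 n15 n17 n19 nB m0 m1 m2 m3 m4 m5 m6 m7 m8 mB1 mB2 zero_le_numeral zero_le_one)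
  have Deq: "34 * ((p alg spineS 0) - \<gamma> * 1) + 21 * ((p alg spineS 0 + p alg spineS 1 + p alg spineS 2) - \<gamma> * 2) + 13 * ((p alg spineS 0 + p alg spineS 1 + p alg spineS 2 + p alg spineS 3 + p alg spineS 4) - \<gamma> * 3) + 8 * ((p alg spineS 0 + p alg spineS 1 + p alg spineS 2 + p alg spineS 3 + p alg spineS 4 + p alg spineS 5 + p alg spineS 6) - \<gamma> * 4) + 5 * ((p alg spineS 0 + p alg spineS 1 + p alg spineS 2 + p alg spineS 3 + p alg spineS 4 + p alg spineS 5 + p alg spineS 6 + p alg spineS 7 + p alg spineS 8) - \<gamma> * 5) + 3 * ((p alg spineS 0 + p alg spineS 1 + p alg spineS 2 + p alg spineS 3 + p alg spineS 4 + p alg spineS 5 + p alg spineS 6 + p alg spineS 7 + p alg spineS 8 + p alg spineS 9 + p alg spineS 10) - \<gamma> * 6) + 2 * ((p alg spineS 0 + p alg spineS 1 + p alg spineS 2 + p alg spineS 3 + p alg spineS 4 + p alg spineS 5 + p alg spineS 6 + p alg spineS 7 + p alg spineS 8 + p alg spineS 9 + p alg spineS 10 + p alg spineS 11 + p alg spineS 12) - \<gamma> * 7) + 1 * ((p alg spineS 0 + p alg spineS 1 + p alg spineS 2 + p alg spineS 3 + p alg spineS 4 + p alg spineS 5 + p alg spineS 6 + p alg spineS 7 + p alg spineS 8 + p alg spineS 9 + p alg spineS 10 + p alg spineS 11 + p alg spineS 12 + p alg spineS 13 + p alg spineS 14) - \<gamma> * 8) + 1 * ((p alg spineS 0 + p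 alg spineS 1 + p alg spineS 2 + p alg spineS 3 + p alg spineS 4 + p alg spineS 5 + p alg spineS 6 + p alg spineS 7 + p alg spineS 8 + p alg spineS 9 + p alg spineS 10 + p alg spineS 11 + p alg spineS 12 + p alg spineS 13 + p alg spineS 14 + p alg spineS 15 + p alg spineS 16) - \<gamma> * 9) + 1 * ((p alg spineS 0 + p alg spineS 1 + p alg spineS 2 + p alg spineS 3 + p alg spineS 4 + p alg spineS 5 + p alg spineS 6 + p alg spineS 7 + p alg spineS 8 + p alg spineS 9 + p alg spineS 10 + p alg spineS 11 + p alg spineS 12 + p alg spineS 13 + p alg spineS 14 + p alg spineS 15 + p alg spineS 16 + p alg spineS 17 + p alg spineS 18) - \<gamma> * 10) + 55 * ((p alg branchB 0 + p alg branchB 1 + p alg branchB 2 + p alg branchB 3) - \<gamma> * 2) + 34 * (1 - (p alg spineS 0 + p alg spineS 2 + p alg spineS 3)) + 21 * (1 - (p alg spineS 2 + p alg spineS 4 + p alg spineS 5)) + 13 * (1 - (p alg spineS 4 + p alg spineS 6 + p alg spineS 7)) + 8 * (1 - (p alg spineS 6 + p alg spineS 8 + p alg spineS 9)) + 5 * (1 - (p alg spineS 8 + p alg spineS 10 + p alg spineS 11)) + 3 * (1 - (p alg spineS 10 + p alg spineS 12 + p alg spineS 13)) + 2 * (1 - (p alg spineS 12 + p alg spineS 14 + p alg spineS 15)) + 1 * (1 - (p alg spineS 14 + p alg spineS 16 + p alg spineS 17)) + 1 * (1 - (p alg spineS 16 + p alg spineS 18)) + 55 * (1 - (p alg branchB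 0 + p alg branchB 1 + p alg branchB 2)) + 55 * (1 - (p alg branchB 0 + p alg branchB 1 + p alg branchB 3)) = 198 - 341 * \<gamma>"
    unfolding pB0 pB1 by (simp add: algebra_simps)
  have "341 * \<gamma> \<le> 198" using D Deq by linarith
  then show False using assms by simp
qed

end
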